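(* Let $s_1,\dots,s_n\in\{0,1\}^{<\mathbb N}$ with $s_i\notin\{1^m:m\ge0\}$ for each $i$, and let $t_1,\dots,t_n\in\mathbb Z$ with $\sum_{i=1}^n t_i=0$. Then $y_{s_1}^{t_1}\cdots y_{s_n}^{t_n}\in S$.
   Context: Let $\{0,1\}^{\mathbb N}$ be the Cantor set of infinite binary sequences and $\{0,1\}^{<\mathbb N}$ the set of finite binary words, including the empty word (note $1^0$ is the empty word); juxtaposition denotes concatenation, $0^n,1^n$ denote constant words. Homeomorphisms act on the right. Define $x,y$ by $00\eta\cdot x=0\eta$, $01\eta\cdot x=10\eta$, $1\eta\cdot x=11\eta$, and recursively $00\eta\cdot y=0(\eta\cdot y)$, $01\eta\cdot y=10(\eta\cdot y^{-1})$, $1\eta\cdot y=11(\eta\cdot y)$; $x_s$ (resp. $y_s$) sends $s\eta\mapsto s(\eta\cdot x)$ (resp. $s(\eta\cdot y)$) and fixes sequences not beginning with $s$. For $n\ge0$, $p_n$ is the homeomorphism with $1^k0\eta\cdot p_n=1^{k+1}0\eta$ for $0\le k\le n-1$, $1^n0\eta\cdot p_n=1^{n+1}\eta$, and $1^{n+1}\eta\cdot p_n=0\eta$. $T$ is the group generated by all $x_s$ and all $p_n$, and $S=\langle T,\ y_{10}y_{110}^{-1}\rangle$. *)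

theory Defs
  imports Main
begin

text \<open>Cantor space: infinite binary sequences, with False = 0 and True = 1.
  Finite words are bool lists.  Homeomorphisms act on the right, so the group
  product g h (first g, then h) is the function composition h \<circ> g.\<close>

type_synonym seq = "nat \<Rightarrow> bool"
type_synonym homeo = "seq \<Rightarrow> seq"

definition conc :: "bool list \<Rightarrow> seq \<Rightarrow> seq" where
  "conc w \<eta> = (\<lambda>k. if k < length w then w ! k else \<eta> (k - length w))"

definition shift :: "nat \<Rightarrow> seq \<Rightarrow> seq" where
  "shift n \<eta> = (\<lambda>k. \<eta> (k + n))"

definition has_prefix :: "bool list \<Rightarrow> seq \<Rightarrow> bool" where
  "has_prefix w \<eta> \<longleftrightarrow> (\<forall>k<length w. \<eta> k = w ! k)"

definition at_word :: "bool list \<Rightarrow> homeo \<Rightarrow> homeo" where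
  "at_word s h \<eta> = (if has_prefix s \<eta> then conc s (h (shift (length s) \<eta>)) else \<eta>)"

definition xmap :: homeo where
  "xmap \<eta> =
     (if \<not> \<eta> 0 \<and> \<not> \<eta> 1 then conc [False] (shift 2 \<eta>)
      else if \<not> \<eta> 0 \<and> \<eta> 1 then conc [True, False] (shift 2 \<eta>)
      else conc [True, True] (shift 1 \<eta>))"

definition ymap :: homeo where
  "ymap = (THE f. bij f \<and>
     (\<forall>\<eta>. f (conc [False, False] \<eta>) = conc [False] (f \<eta>)
        \<and> f (conc [False, True] \<eta>) = conc [True, False] (inv f \<eta>)
        \<and> f (conc [True] \<eta>) = conc [True, True] (f \<eta>)))"

definition xs :: "bool list \<Rightarrow> homeo" where
  "xs s = at_word s xmap"

definition ys :: "bool list \<Rightarrow> homeo" where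
  "ys s = at_word s ymap"

definition pmap :: "nat \<Rightarrow> homeo" where
  "pmap n \<eta> =
     (if has_prefix (replicate (n+1) True) \<eta> then conc [False] (shift (n+1) \<eta>)
      else if has_prefix (replicate n True @ [False]) \<eta>
        then conc (replicate (n+1) True) (shift (n+1) \<eta>)
      else conc [True] \<eta>)"

inductive_set gen_group :: "homeo set \<Rightarrow> homeo set" for A where
  gen_base: "a \<in> A \<Longrightarrow> a \<in> gen_group A"
| gen_id: "id \<in> gen_group A"
| gen_mult: "g \<in> gen_group A \<Longrightarrow> h \<in> gen_group A \<Longrightarrow> h \<circ> g \<in> gen_group A"
| gen_inv: "g \<in> gen_group A \<Longrightarrow> inv g \<in> gen_group A"

definition T_gens :: "homeo set" where
  "T_gens = range xs \<union> range pmap"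

definition T_grp :: "homeo set" where
  "T_grp = gen_group T_gens"

text \<open>S = < T, y_10 y_110^{-1} >; the product y_10 y_110^{-1} (right action) is
  inv (ys [1,1,0]) \<circ> ys [1,0].\<close>
definition S_grp :: "homeo set" where
  "S_grp = gen_group (T_gens \<union> {inv (ys [True, True, False]) \<circ> ys [True, False]})"

definition zpow :: "homeo \<Rightarrow> int \<Rightarrow> homeo" where
  "zpow f t = (if 0 \<le> t then f ^^ nat t else (inv f) ^^ nat (- t))"

definition rprod :: "homeo list \<Rightarrow> homeo" where
  "rprod gs = foldl (\<lambda>acc g. g \<circ> acc) id gs"

end

theory Submission
  imports Defs
begin


definition scons :: "bool \<Rightarrow> seq \<Rightarrow> seq" where
  "scons b z = (\<lambda>k. if k = 0 then b else z (k - 1))"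

lemma scons_0[simp]: "scons b z 0 = b" by (simp add: scons_def)
lemma scons_Suc[simp]: "scons b z (Suc k) = z k" by (simp add: scons_def)
lemma scons_1[simp]: "scons b z 1 = z 0" by (simp add: scons_def)
lemma scons_num[simp]: "scons b z (numeral n) = z (pred_numeral n)"
  by (simp add: numeral_eq_Suc)

lemma conc_Nil[simp]: "conc [] \<eta> = \<eta>" by (simp add: conc_def)
lemma conc_Cons[simp]: "conc (b#w) \<eta> = scons b (conc w \<eta>)"
  by (rule ext, rename_tac k, case_tac k) (auto simp: conc_def scons_def)

lemma shift_0[simp]: "shift 0 \<eta> = \<eta>" by (simp add: shift_def)
lemma shift_Suc_scons[simp]: "shift (Suc n) (scons b z) = shift n z"
  by (simp add: shift_def scons_def)
lemma shift_1_scons[simp]: "shift 1 (scons b z) = z"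
  by (simp add: shift_def scons_def)
lemma shift_num_scons[simp]: "shift (numeral n) (scons b z) = shift (pred_numeral n) z"
  by (simp add: numeral_eq_Suc)
lemma shift_Suc: "shift (Suc n) \<eta> = shift n (shift 1 \<eta>)"
  by (simp add: shift_def add.assoc)
lemma shift_1_app[simp]: "shift 1 \<eta> k = \<eta> (Suc k)" by (simp add: shift_def)
lemma scons_eta: "scons (\<eta> 0) (shift 1 \<eta>) = \<eta>"
  by (rule ext, rename_tac k, case_tac k) (auto simp: scons_def shift_def)
lemma eta2: "\<exists>a b z. \<eta> = scons a (scons b z)"
proof -
  have "\<eta> = scons (\<eta> 0) (scons (shift 1 \<eta> 0) (shift 1 (shift 1 \<eta>)))"
    by (simp only: scons_eta)
  then show ?thesis by blast
qed
lemma eta5: "\<exists>a b c d e z. \<eta> = scons a (scons b (scons c (scons d (scons e z))))"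
proof -
  have "\<eta> = scons (\<eta> 0) (scons (shift 1 \<eta> 0) (scons (shift 1 (shift 1 \<eta>) 0)
     (scons (shift 1 (shift 1 (shift 1 \<eta>)) 0) (scons (shift 1 (shift 1 (shift 1 (shift 1 \<eta>))) 0)
     (shift 1 (shift 1 (shift 1 (shift 1 (shift 1 \<eta>)))))))))"
    by (simp only: scons_eta)
  then show ?thesis by blast
qed

lemma has_prefix_Nil[simp]: "has_prefix [] \<eta>" by (simp add: has_prefix_def)
lemma has_prefix_Cons[simp]: "has_prefix (a#w) \<eta> \<longleftrightarrow> \<eta> 0 = a \<and> has_prefix w (shift 1 \<eta>)"
  unfolding has_prefix_def by (auto simp: shift_def less_Suc_eq_0_disj)

lemma has_prefix_conc[simp]: "has_prefix w (conc w \<eta>)"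
  by (induct w) auto
lemma shift_conc[simp]: "shift (length w) (conc w \<eta>) = \<eta>"
  by (induct w) auto
lemma conc_shift: "has_prefix w \<eta> \<Longrightarrow> conc w (shift (length w) \<eta>) = \<eta>"
proof (induct w arbitrary: \<eta>)
  case Nil then show ?case by simp
next
  case (Cons a w)
  have h1: "\<eta> 0 = a" and h2: "has_prefix w (shift 1 \<eta>)" using Cons.prems by simp_all
  have e: "shift (length (a#w)) \<eta> = shift (length w) (shift 1 \<eta>)"
    by (rule ext) (simp add: shift_def)
  have "conc (a#w) (shift (length (a#w)) \<eta>) = scons a (conc w (shift (length w) (shift 1 \<eta>)))"
    by (simp only: e conc_Cons)
  also have "\<dots> = scons a (shift 1 \<eta>)" using Cons.hyps[OF h2] by simp
  also have "\<dots> = \<eta>" using scons_eta[of \<eta>] h1 by simp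
  finally show ?case .
qed

lemma at_word_conc[simp]: "at_word w h (conc w \<eta>) = conc w (h \<eta>)"
  by (simp add: at_word_def)
lemma at_word_out: "\<not> has_prefix w \<zeta> \<Longrightarrow> at_word w h \<zeta> = \<zeta>"
  by (simp add: at_word_def)
lemma at_word_Nil[simp]: "at_word [] h = h"
  by (rule ext) (simp add: at_word_def)

lemma at_word_comp: "at_word w h \<circ> at_word w k = at_word w (h \<circ> k)"
proof (rule ext)
  fix \<zeta>
  show "(at_word w h \<circ> at_word w k) \<zeta> = at_word w (h \<circ> k) \<zeta>"
  proof (cases "has_prefix w \<zeta>")
    case True
    then obtain \<eta> where "\<zeta> = conc w \<eta>" using conc_shift by metis
    then show ?thesis by simp
  next
    case False then show ?thesis by (simp add: at_word_out)
  qed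
qed

lemma at_word_id: "at_word w id = id"
proof (rule ext)
  fix \<zeta> show "at_word w id \<zeta> = id \<zeta>"
    by (cases "has_prefix w \<zeta>") (auto simp: at_word_def conc_shift)
qed

lemma bij_at_word: "bij h \<Longrightarrow> bij (at_word w h)"
  by (rule o_bij[of "at_word w (inv h)"])
     (use bij_is_surj[THEN surj_iff[THEN iffD1], of h] bij_is_inj[THEN inj_iff[THEN iffD1], of h] in
      \<open>simp_all add: at_word_comp at_word_id\<close>)

lemma inv_at_word: "bij h \<Longrightarrow> inv (at_word w h) = at_word w (inv h)"
  by (rule inv_unique_comp)
     (use bij_is_surj[THEN surj_iff[THEN iffD1], of h] bij_is_inj[THEN inj_iff[THEN iffD1], of h] in
      \<open>simp_all add: at_word_comp at_word_id\<close>)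

definition incomp :: "bool list \<Rightarrow> bool list \<Rightarrow> bool" where
  "incomp a b \<longleftrightarrow> (\<exists>i. i < length a \<and> i < length b \<and> a ! i \<noteq> b ! i)"

lemma incomp_prefix: "incomp a b \<Longrightarrow> has_prefix a \<zeta> \<Longrightarrow> \<not> has_prefix b \<zeta>"
proof
  assume "incomp a b" "has_prefix a \<zeta>" "has_prefix b \<zeta>"
  then obtain i where i: "i < length a" "i < length b" "a ! i \<noteq> b ! i" unfolding incomp_def by blast
  have "\<zeta> i = a ! i" using \<open>has_prefix a \<zeta>\<close> i(1) unfolding has_prefix_def by blast
  moreover have "\<zeta> i = b ! i" using \<open>has_prefix b \<zeta>\<close> i(2) unfolding has_prefix_def by blast
  ultimately show False using i(3) by simp
qed

lemma at_word_commute: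
  assumes "incomp a b"
  shows "at_word a h \<circ> at_word b k = at_word b k \<circ> at_word a h"
proof (rule ext)
  have ib: "incomp b a" using assms unfolding incomp_def by metis
  fix \<zeta>
  show "(at_word a h \<circ> at_word b k) \<zeta> = (at_word b k \<circ> at_word a h) \<zeta>"
  proof (cases "has_prefix a \<zeta>")
    case True
    then obtain \<eta> where e: "\<zeta> = conc a \<eta>" using conc_shift by metis
    have "\<not> has_prefix b \<zeta>" using True incomp_prefix assms by blast
    moreover have "\<not> has_prefix b (conc a (h \<eta>))" using incomp_prefix assms by simp
    ultimately show ?thesis using e by (simp add: at_word_out)
  next
    case False
    show ?thesis
    proof (cases "has_prefix b \<zeta>")
      case True
      then obtain \<eta> where e: "\<zeta> = conc b \<eta>" using conc_shift by metis
      have "\<not> has_prefix a (conc b (k \<eta>))" using incomp_prefix ib by simp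
      then show ?thesis using e False by (simp add: at_word_out)
    next
      case False2: False
      then show ?thesis using False by (simp add: at_word_out)
    qed
  qed
qed

definition xinv :: homeo where
  "xinv \<eta> = (if \<not> \<eta> 0 then scons False (scons False (shift 1 \<eta>))
     else if \<not> \<eta> 1 then scons False (scons True (shift 1 (shift 1 \<eta>)))
     else scons True (shift 1 (shift 1 \<eta>)))"

lemma xmap_scons2: "xmap (scons a (scons b z)) =
   (if \<not> a \<and> \<not> b then scons False z else if \<not> a then scons True (scons False z)
    else scons True (scons True (scons b z)))"
  by (simp add: xmap_def)

lemma xinv_scons2: "xinv (scons a (scons b z)) =
   (if \<not> a then scons False (scons False (scons b z)) else if \<not> b then scons False (scons True z)
    else scons True z)"
  by (simp add: xinv_def)

lemma bij_xmap: "bij xmap" and inv_xmap: "inv xmap = xinv"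
proof -
  have 1: "xmap \<circ> xinv = id"
  proof (rule ext)
    fix \<eta> show "(xmap \<circ> xinv) \<eta> = id \<eta>"
    proof -
      obtain a b c d e z where e: "\<eta> = scons a (scons b (scons c (scons d (scons e z))))"
        using eta5 by blast
      show ?thesis by (cases a; cases b; cases c; simp add: e xmap_scons2 xinv_scons2)
    qed
  qed
  have 2: "xinv \<circ> xmap = id"
  proof (rule ext)
    fix \<eta> show "(xinv \<circ> xmap) \<eta> = id \<eta>"
    proof -
      obtain a b c d e z where e: "\<eta> = scons a (scons b (scons c (scons d (scons e z))))"
        using eta5 by blast
      show ?thesis by (cases a; cases b; cases c; simp add: e xmap_scons2 xinv_scons2)
    qed
  qed
  show "bij xmap" by (rule o_bij[OF 2 1])
  show "inv xmap = xinv" by (rule inv_unique_comp[OF 1 2])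
qed

definition qmap :: homeo where
  "qmap \<eta> = (if \<not> \<eta> 0 then scons True (scons True (scons True (shift 1 \<eta>)))
     else if \<not> \<eta> 1 then scons False (shift 1 (shift 1 \<eta>))
     else if \<not> \<eta> 2 then scons True (scons False (shift 1 (shift 1 (shift 1 \<eta>))))
     else scons True (scons True (scons False (shift 1 (shift 1 (shift 1 \<eta>))))))"

lemma pmap2_scons3: "pmap 2 (scons a (scons b (scons c z))) =
   (if a \<and> b \<and> c then scons False z
    else if a \<and> b then scons True (scons True (scons True z))
    else scons True (scons a (scons b (scons c z))))"
  by (simp add: pmap_def numeral_eq_Suc)

lemma qmap_scons3: "qmap (scons a (scons b (scons c z))) =
   (if \<not> a then scons True (scons True (scons True (scons b (scons c z))))
    else if \<not> b then scons False (scons c z)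
    else if \<not> c then scons True (scons False z)
    else scons True (scons True (scons False z)))"
  by (simp add: qmap_def)

lemma bij_pmap2: "bij (pmap 2)"
proof -
  have 1: "pmap 2 \<circ> qmap = id"
  proof (rule ext)
    fix \<eta> show "(pmap 2 \<circ> qmap) \<eta> = id \<eta>"
    proof -
      obtain a b c d e z where e: "\<eta> = scons a (scons b (scons c (scons d (scons e z))))"
        using eta5 by blast
      show ?thesis by (cases a; cases b; cases c; cases d; simp add: e pmap2_scons3 qmap_scons3)
    qed
  qed
  have 2: "qmap \<circ> pmap 2 = id"
  proof (rule ext)
    fix \<eta> show "(qmap \<circ> pmap 2) \<eta> = id \<eta>"
    proof -
      obtain a b c d e z where e: "\<eta> = scons a (scons b (scons c (scons d (scons e z))))"
        using eta5 by blast
      show ?thesis by (cases a; cases b; cases c; cases d; simp add: e pmap2_scons3 qmap_scons3)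
    qed
  qed
  show ?thesis by (rule o_bij[OF 2 1])
qed



definition out :: "bool \<Rightarrow> seq \<Rightarrow> bool list \<times> bool \<times> nat" where
  "out m \<eta> = (if m then (if \<not> \<eta> 0 \<and> \<not> \<eta> 1 then ([False], True, 2)
                        else if \<not> \<eta> 0 then ([True, False], False, 2) else ([True, True], True, 1))
             else (if \<not> \<eta> 0 then ([False, False], False, 1)
                   else if \<not> \<eta> 1 then ([False, True], True, 2) else ([True], False, 2)))"

fun outs :: "nat \<Rightarrow> bool \<Rightarrow> seq \<Rightarrow> bool list" where
  "outs 0 m \<eta> = []"
| "outs (Suc n) m \<eta> = (case out m \<eta> of (w, m', c) \<Rightarrow> w @ outs n m' (shift c \<eta>))"

definition Y :: "bool \<Rightarrow> homeo" where
  "Y m \<eta> k = outs (Suc k) m \<eta> ! k"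

lemma out_ne: "out m \<eta> = (w, m', c) \<Longrightarrow> w \<noteq> []"
  by (auto simp: out_def split: if_splits)

lemma outs_len: "n \<le> length (outs n m \<eta>)"
proof (induct n arbitrary: m \<eta>)
  case 0 then show ?case by simp
next
  case (Suc n)
  obtain w m' c where o: "out m \<eta> = (w, m', c)" by (cases "out m \<eta>") auto
  have "w \<noteq> []" using out_ne[OF o] .
  then have "1 \<le> length w" by (cases w) auto
  with Suc[of m' "shift c \<eta>"] o show ?case by simp
qed

lemma outs_prefix1: "\<exists>v. outs (Suc n) m \<eta> = outs n m \<eta> @ v"
proof (induct n arbitrary: m \<eta>)
  case 0 then show ?case by simp
next
  case (Suc n)
  obtain w m' c where o: "out m \<eta> = (w, m', c)" by (cases "out m \<eta>") auto
  obtain v where "outs (Suc n) m' (shift c \<eta>) = outs n m' (shift c \<eta>) @ v" using Suc by blast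
  moreover have "outs (Suc (Suc n)) m \<eta> = w @ outs (Suc n) m' (shift c \<eta>)" using o by simp
  moreover have "outs (Suc n) m \<eta> = w @ outs n m' (shift c \<eta>)" using o by simp
  ultimately show ?case by auto
qed

lemma outs_prefix: "n \<le> n' \<Longrightarrow> \<exists>v. outs n' m \<eta> = outs n m \<eta> @ v"
proof (induct n' rule: dec_induct)
  case base then show ?case by simp
next
  case (step n')
  then obtain v where "outs n' m \<eta> = outs n m \<eta> @ v" by blast
  moreover obtain u where "outs (Suc n') m \<eta> = outs n' m \<eta> @ u" using outs_prefix1 by blast
  ultimately show ?case by auto
qed

lemma outs_nth: "k < length (outs n m \<eta>) \<Longrightarrow> outs n m \<eta> ! k = Y m \<eta> k"
proof -
  assume k: "k < length (outs n m \<eta>)"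
  define N where "N = max n (Suc k)"
  obtain v where v: "outs N m \<eta> = outs n m \<eta> @ v" using outs_prefix[of n N] N_def by auto
  obtain u where u: "outs N m \<eta> = outs (Suc k) m \<eta> @ u" using outs_prefix[of "Suc k" N] N_def by auto
  have k2: "k < length (outs (Suc k) m \<eta>)" using outs_len[of "Suc k" m \<eta>] by simp
  have "outs n m \<eta> ! k = outs N m \<eta> ! k" using v k by (simp add: nth_append)
  also have "\<dots> = outs (Suc k) m \<eta> ! k" using u k2 by (simp add: nth_append)
  finally show ?thesis by (simp add: Y_def)
qed

lemma Y_eq: "out m \<eta> = (w, m', c) \<Longrightarrow> Y m \<eta> = conc w (Y m' (shift c \<eta>))"
proof (rule ext)
  fix k assume o: "out m \<eta> = (w, m', c)"
  show "Y m \<eta> k = conc w (Y m' (shift c \<eta>)) k"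
  proof (cases "k < length w")
    case True
    have "Y m \<eta> k = outs (Suc k) m \<eta> ! k" by (simp add: Y_def)
    also have "\<dots> = w ! k" using o True by (simp add: nth_append)
    finally show ?thesis using True by (simp add: conc_def)
  next
    case False
    define n where "n = Suc (k - length w)"
    have l: "n \<le> length (outs n m' (shift c \<eta>))" by (rule outs_len)
    have eq: "outs (Suc n) m \<eta> = w @ outs n m' (shift c \<eta>)" using o by simp
    have kl: "k < length (outs (Suc n) m \<eta>)" using eq l False n_def by simp
    have "Y m \<eta> k = outs (Suc n) m \<eta> ! k" using outs_nth[OF kl] by simp
    also have "\<dots> = outs n m' (shift c \<eta>) ! (k - length w)" using eq False by (simp add: nth_append)
    also have "\<dots> = Y m' (shift c \<eta>) (k - length w)"
      by (rule outs_nth) (use l n_def in simp)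
    finally show ?thesis using False by (simp add: conc_def)
  qed
qed

lemma Y1[simp]: "Y True (scons False (scons False z)) = scons False (Y True z)"
  by (subst Y_eq[where w="[False]" and m'=True and c=2]) (auto simp: out_def)
lemma Y2[simp]: "Y True (scons False (scons True z)) = scons True (scons False (Y False z))"
  by (subst Y_eq[where w="[True,False]" and m'=False and c=2]) (auto simp: out_def)
lemma Y3[simp]: "Y True (scons True z) = scons True (scons True (Y True z))"
  by (subst Y_eq[where w="[True,True]" and m'=True and c=1]) (auto simp: out_def)
lemma Y4[simp]: "Y False (scons False z) = scons False (scons False (Y False z))"
  by (subst Y_eq[where w="[False,False]" and m'=False and c=1]) (auto simp: out_def)
lemma Y5[simp]: "Y False (scons True (scons False z)) = scons False (scons True (Y True z))"
  by (subst Y_eq[where w="[False,True]" and m'=True and c=2]) (auto simp: out_def)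
lemma Y6[simp]: "Y False (scons True (scons True z)) = scons True (Y False z)"
  by (subst Y_eq[where w="[True]" and m'=False and c=2]) (auto simp: out_def)

definition agree :: "nat \<Rightarrow> seq \<Rightarrow> seq \<Rightarrow> bool" where
  "agree k X Z \<longleftrightarrow> (\<forall>i<k. X i = Z i)"

lemma agree_scons: "agree k X Z \<Longrightarrow> agree (Suc k) (scons b X) (scons b Z)"
  unfolding agree_def by (auto simp: less_Suc_eq_0_disj)
lemma agree_mono: "agree k X Z \<Longrightarrow> j \<le> k \<Longrightarrow> agree j X Z"
  unfolding agree_def by auto
lemma agree_scons2: "agree k X Z \<Longrightarrow> agree (Suc k) (scons b (scons c X)) (scons b (scons c Z))"
  by (rule agree_mono[of "Suc (Suc k)"]) (auto intro!: agree_scons)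
lemma agree_0[simp]: "agree 0 X Z" by (simp add: agree_def)
lemma agree_all: "(\<And>k. agree k X Z) \<Longrightarrow> X = Z"
  unfolding agree_def by (rule ext) blast


lemma Y_inv_agree: "agree k (Y False (Y True \<eta>)) \<eta> \<and> agree k (Y True (Y False \<eta>)) \<eta>"
proof (induct k arbitrary: \<eta>)
  case 0 then show ?case by simp
next
  case (Suc k)
  obtain a b z where e: "\<eta> = scons a (scons b z)" using eta2 by metis
  show ?case unfolding e
    using Suc[of z] Suc[of "scons b z"]
    by (cases a; cases b; simp add: agree_scons agree_scons2)
qed

lemma Y_comp1: "Y False \<circ> Y True = id" and Y_comp2: "Y True \<circ> Y False = id"
  using Y_inv_agree by (auto intro!: ext agree_all)

lemma bij_Y: "bij (Y True)" by (rule o_bij[OF Y_comp1 Y_comp2])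
lemma inv_Y: "inv (Y True) = Y False" by (rule inv_unique_comp[OF Y_comp2 Y_comp1])

definition Pf :: "homeo \<Rightarrow> bool" where
  "Pf f \<longleftrightarrow> bij f \<and>
     (\<forall>\<eta>. f (conc [False, False] \<eta>) = conc [False] (f \<eta>)
        \<and> f (conc [False, True] \<eta>) = conc [True, False] (inv f \<eta>)
        \<and> f (conc [True] \<eta>) = conc [True, True] (f \<eta>))"

lemma Pf_Y: "Pf (Y True)"
  unfolding Pf_def using bij_Y inv_Y by simp

lemma Pf_unique:
  assumes "Pf f" shows "f = Y True"
proof -
  have b: "bij f" using assms Pf_def by simp
  have f1: "f (scons False (scons False z)) = scons False (f z)"
   and f2: "f (scons False (scons True z)) = scons True (scons False (inv f z))"
   and f3: "f (scons True z) = scons True (scons True (f z))" for z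
    using assms unfolding Pf_def by simp_all
  have g1: "inv f (scons False z) = scons False (scons False (inv f z))" for z
    using f1[of "inv f z"] b by (metis bij_inv_eq_iff)
  have g2: "inv f (scons True (scons False z)) = scons False (scons True (f z))" for z
    using f2[of "f z"] b by (metis bij_inv_eq_iff)
  have g3: "inv f (scons True (scons True z)) = scons True (inv f z)" for z
    using f3[of "inv f z"] b by (metis bij_inv_eq_iff)
  have "agree k (f \<eta>) (Y True \<eta>) \<and> agree k (inv f \<eta>) (Y False \<eta>)" for k \<eta>
  proof (induct k arbitrary: \<eta>)
    case 0 then show ?case by simp
  next
    case (Suc k)
    obtain a b z where e: "\<eta> = scons a (scons b z)" using eta2 by metis
    show ?case unfolding e
      using Suc[of z] Suc[of "scons b z"]
      by (cases a; cases b; simp add: f1 f2 f3 g1 g2 g3 agree_scons agree_scons2)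
  qed
  then show ?thesis by (auto intro!: ext agree_all)
qed

lemma ymap_Y: "ymap = Y True"
  unfolding ymap_def
  apply (rule the_equality)
  using Pf_Y Pf_unique unfolding Pf_def by auto

lemma bij_ymap: "bij ymap" using ymap_Y bij_Y by simp



lemma S_mult: "g \<in> S_grp \<Longrightarrow> h \<in> S_grp \<Longrightarrow> h \<circ> g \<in> S_grp"
  unfolding S_grp_def by (rule gen_mult)
lemma S_inv: "g \<in> S_grp \<Longrightarrow> inv g \<in> S_grp"
  unfolding S_grp_def by (rule gen_inv)
lemma S_id: "id \<in> S_grp"
  unfolding S_grp_def by (rule gen_id)
lemma S_xs: "xs w \<in> S_grp"
  unfolding S_grp_def T_gens_def by (rule gen_base) auto
lemma S_pmap: "pmap n \<in> S_grp"
  unfolding S_grp_def T_gens_def by (rule gen_base) auto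
lemma S_gen: "inv (ys [True, True, False]) \<circ> ys [True, False] \<in> S_grp"
  unfolding S_grp_def by (rule gen_base) auto
lemma S_xmap: "xmap \<in> S_grp" using S_xs[of "[]"] by (simp add: xs_def)

lemma bij_ys: "bij (ys w)" unfolding ys_def by (rule bij_at_word[OF bij_ymap])
lemma inv_ys: "inv (ys w) = at_word w (inv ymap)" unfolding ys_def by (rule inv_at_word[OF bij_ymap])
lemma bij_xs: "bij (xs w)" unfolding xs_def by (rule bij_at_word[OF bij_xmap])

lemma conj_at_word:
  assumes b: "bij g" and r: "\<And>\<eta>. g (conc a \<eta>) = conc a' \<eta>"
  shows "at_word a' h = g \<circ> at_word a h \<circ> inv g"
proof (rule ext)
  fix \<zeta>
  show "at_word a' h \<zeta> = (g \<circ> at_word a h \<circ> inv g) \<zeta>"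
  proof (cases "has_prefix a' \<zeta>")
    case True
    then obtain \<eta> where e: "\<zeta> = conc a' \<eta>" using conc_shift by metis
    have "inv g \<zeta> = conc a \<eta>" using r[of \<eta>] e b by (metis bij_inv_eq_iff)
    then show ?thesis using e r by simp
  next
    case False
    have "\<not> has_prefix a (inv g \<zeta>)"
    proof
      assume "has_prefix a (inv g \<zeta>)"
      then obtain \<eta> where "inv g \<zeta> = conc a \<eta>" using conc_shift by metis
      then have "\<zeta> = conc a' \<eta>" using r[of \<eta>] b by (metis bij_inv_eq_iff)
      then show False using False by simp
    qed
    then show ?thesis using False surj_f_inv_f[OF bij_is_surj[OF b]] by (simp add: at_word_out)
  qed
qed

definition Q :: "bool list \<Rightarrow> bool list \<Rightarrow> bool" where
  "Q a b \<longleftrightarrow> inv (ys b) \<circ> ys a \<in> S_grp"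

lemma Q_conj:
  assumes gS: "g \<in> S_grp" and b: "bij g"
    and ra: "\<And>\<eta>. g (conc a \<eta>) = conc a' \<eta>" and rb: "\<And>\<eta>. g (conc b \<eta>) = conc b' \<eta>"
  shows "Q a b \<longleftrightarrow> Q a' b'"
proof -
  have gg: "inv g \<circ> g = id" using b bij_is_inj inj_iff by blast
  have gg2: "g \<circ> inv g = id" using b bij_is_surj surj_iff by blast
  have 1: "ys a' = g \<circ> ys a \<circ> inv g" unfolding ys_def by (rule conj_at_word[OF b ra])
  have 2: "inv (ys b') = g \<circ> inv (ys b) \<circ> inv g" unfolding inv_ys by (rule conj_at_word[OF b rb])
  define X where "X = inv (ys b) \<circ> ys a"
  have ii: "inv g (g x) = x" for x using b by (simp add: bij_is_inj inv_f_f)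
  have e: "inv (ys b') \<circ> ys a' = g \<circ> X \<circ> inv g"
    unfolding 1 2 X_def by (rule ext) (simp add: ii)
  have e2: "X = inv g \<circ> (g \<circ> X \<circ> inv g) \<circ> g"
    by (rule ext) (simp add: ii)
  have igS: "inv g \<in> S_grp" using gS by (rule S_inv)
  show ?thesis
  proof
    assume "Q a b"
    then have "X \<in> S_grp" by (simp add: Q_def X_def)
    then have "g \<circ> X \<circ> inv g \<in> S_grp" by (intro S_mult[OF igS] S_mult[OF _ gS])
    then show "Q a' b'" by (simp add: Q_def e)
  next
    assume "Q a' b'"
    then have "g \<circ> X \<circ> inv g \<in> S_grp" by (simp add: Q_def e)
    then have "inv g \<circ> (g \<circ> X \<circ> inv g) \<circ> g \<in> S_grp" by (intro S_mult[OF gS] S_mult[OF _ igS])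
    then have "X \<in> S_grp" by (rule subst[OF e2[symmetric]])
    then show "Q a b" by (simp add: Q_def X_def)
  qed
qed

lemma Q_refl: "Q a a"
  unfolding Q_def using inv_o_cancel[OF bij_is_inj[OF bij_ys[of a]]] S_id by simp

lemma Q_sym: "Q a b \<Longrightarrow> Q b a"
proof -
  assume "Q a b"
  then have "inv (inv (ys b) \<circ> ys a) \<in> S_grp" unfolding Q_def by (rule S_inv)
  moreover have "inv (inv (ys b) \<circ> ys a) = inv (ys a) \<circ> ys b"
    using o_inv_distrib[OF bij_imp_bij_inv[OF bij_ys] bij_ys] inv_inv_eq[OF bij_ys] by simp
  ultimately show "Q b a" by (simp add: Q_def)
qed

lemma Q_trans: "Q a b \<Longrightarrow> Q b c \<Longrightarrow> Q a c"
proof -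
  assume "Q a b" "Q b c"
  then have "(inv (ys c) \<circ> ys b) \<circ> (inv (ys b) \<circ> ys a) \<in> S_grp"
    unfolding Q_def by (rule S_mult)
  moreover have idd: "ys b \<circ> inv (ys b) = id" using bij_ys[of b] bij_is_surj surj_iff by blast
  moreover have "(inv (ys c) \<circ> ys b) \<circ> (inv (ys b) \<circ> ys a) = inv (ys c) \<circ> (ys b \<circ> inv (ys b)) \<circ> ys a"
    by (simp add: comp_assoc)
  ultimately show "Q a c" by (simp add: Q_def)
qed

definition K :: "bool list \<Rightarrow> bool" where "K z \<longleftrightarrow> Q z [True, False]"

lemma K_move:
  assumes "g \<in> S_grp" "bij g" "\<And>\<eta>. g (conc a \<eta>) = conc a' \<eta>" "\<And>\<eta>. g (conc c \<eta>) = conc c' \<eta>"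
    and "K c" "K c'"
  shows "K a \<longleftrightarrow> K a'"
proof -
  have "K a \<longleftrightarrow> Q a c" using assms(5) unfolding K_def by (meson Q_sym Q_trans)
  also have "\<dots> \<longleftrightarrow> Q a' c'" by (rule Q_conj[OF assms(1-4)])
  also have "\<dots> \<longleftrightarrow> K a'" using assms(6) unfolding K_def by (meson Q_sym Q_trans)
  finally show ?thesis .
qed

lemma K10: "K [True, False]" by (simp add: K_def Q_refl)
lemma K110: "K [True, True, False]"
  unfolding K_def by (rule Q_sym) (simp add: Q_def S_gen)
lemma K0: "K [False]"
proof -
  have "K [False] \<longleftrightarrow> K [True, False]"
    by (rule K_move[OF S_pmap bij_pmap2, where c="[True, False]" and c'="[True,True,False]"])
       (simp_all add: pmap_def numeral_eq_Suc K10 K110)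
  then show ?thesis using K10 by simp
qed

lemma Kx: assumes "\<And>\<eta>. xmap (conc a \<eta>) = conc a' \<eta>" shows "K a \<longleftrightarrow> K a'"
  by (rule K_move[OF S_xmap bij_xmap assms, where c="[True, False]" and c'="[True,True,False]"])
     (simp_all add: xmap_def K10 K110)

lemma Kx1: assumes "\<And>\<eta>. xs [True] (conc a \<eta>) = conc a' \<eta>" shows "K a \<longleftrightarrow> K a'"
  by (rule K_move[OF S_xs bij_xs assms, where c="[False]" and c'="[False]"])
     (simp_all add: xs_def at_word_def K0)

lemma M1: "K (False#False#u) \<longleftrightarrow> K (False#u)" by (rule Kx) (simp add: xmap_def)
lemma M2: "K (False#True#u) \<longleftrightarrow> K (True#False#u)" by (rule Kx) (simp add: xmap_def)
lemma M3: "K (True#u) \<longleftrightarrow> K (True#True#u)" by (rule Kx) (simp add: xmap_def)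
lemma M4: "K (True#False#False#u) \<longleftrightarrow> K (True#False#u)"
  by (rule Kx1) (simp add: xs_def at_word_def xmap_def)
lemma M5: "K (True#False#True#u) \<longleftrightarrow> K (True#True#False#u)"
  by (rule Kx1) (simp add: xs_def at_word_def xmap_def)

lemma K_TF:
  assumes IH: "\<And>v. length v < length (True#False#u) \<Longrightarrow> False \<in> set v \<Longrightarrow> K v"
  shows "K (True#False#u)"
proof (cases u)
  case Nil then show ?thesis using K10 by simp
next
  case (Cons c u')
  have k: "K (True#False#u')" by (rule IH) (simp_all add: Cons)
  show ?thesis
  proof (cases c)
    case False
    have "K (True#False#False#u')" using M4[of u'] k by blast
    then show ?thesis using Cons False by simp
  next
    case True
    have "K (True#True#False#u')" using M3[of "False#u'"] k by blast
    then have "K (True#False#True#u')" using M5[of u'] by blast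
    then show ?thesis using Cons True by simp
  qed
qed

lemma K_all: "False \<in> set z \<Longrightarrow> K z"
proof (induct z rule: length_induct)
  case (1 z)
  then have IH: "\<And>v. length v < length z \<Longrightarrow> False \<in> set v \<Longrightarrow> K v" by blast
  show ?case
  proof (cases z)
    case Nil then show ?thesis using 1 by simp
  next
    case (Cons a z')
    show ?thesis
    proof (cases z')
      case Nil then show ?thesis using 1(2) Cons K0 by (cases a) simp_all
    next
      case (Cons b u)
      have zz: "z = a # b # u" using \<open>z = a # z'\<close> Cons by simp
      have tf: "K (True#False#u)"
        by (rule K_TF, rule IH) (simp_all add: zz)
      show ?thesis
      proof (cases a; cases b)
        assume "a" "b"
        have "K (True#u)" by (rule IH) (use 1(2) zz \<open>a\<close> \<open>b\<close> in simp_all)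
        then have "K (True#True#u)" using M3[of u] by blast
        then show ?thesis using zz \<open>a\<close> \<open>b\<close> by simp
      next
        assume "a" "\<not> b"
        then show ?thesis using tf zz by simp
      next
        assume "\<not> a" "b"
        have "K (False#True#u)" using M2[of u] tf by blast
        then show ?thesis using zz \<open>\<not> a\<close> \<open>b\<close> by simp
      next
        assume "\<not> a" "\<not> b"
        have "K (False#u)" by (rule IH) (simp_all add: zz)
        then have "K (False#False#u)" using M1[of u] by blast
        then show ?thesis using zz \<open>\<not> a\<close> \<open>\<not> b\<close> by simp
      qed
    qed
  qed
qed



lemma zind: "P 0 \<Longrightarrow> (\<And>t. P t \<Longrightarrow> P (t+1)) \<Longrightarrow> (\<And>t. P t \<Longrightarrow> P (t-1)) \<Longrightarrow> P (t::int)"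
proof (cases t)
  case (nonneg n)
  assume a: "P 0" "\<And>t. P t \<Longrightarrow> P (t+1)"
  have "P (int n)"
  proof (induct n)
    case 0 then show ?case using a(1) by simp
  next
    case (Suc n)
    have "int (Suc n) = int n + 1" by simp
    then show ?case using a(2)[OF Suc] by (simp only:)
  qed
  then show ?thesis using nonneg by simp
next
  case (neg n)
  assume a: "P 0" "\<And>t. P t \<Longrightarrow> P (t-1)"
  have "P (- int (Suc n))"
  proof (induct n)
    case 0 then show ?case using a(2)[OF a(1)] by simp
  next
    case (Suc n)
    then show ?case using a(2)[OF Suc] by (simp add: algebra_simps)
  qed
  then show ?thesis using neg by simp
qed

lemma zpow_0[simp]: "zpow f 0 = id" by (simp add: zpow_def)
lemma zpow_int: "zpow f (int n) = f ^^ n" by (simp add: zpow_def)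
lemma zpow_neg: "zpow f (- int (Suc n)) = inv f ^^ Suc n"
proof -
  have "\<not> 0 \<le> - int (Suc n)" by simp
  moreover have "nat (- (- int (Suc n))) = Suc n" by (simp only: minus_minus nat_int)
  ultimately show ?thesis unfolding zpow_def by (simp only: if_False)
qed

lemma S_id'[simp]: "(\<lambda>a. a) \<in> S_grp" using S_id by (simp add: id_def)

lemma zpow_plus1: assumes "bij f" shows "zpow f (t+1) = f \<circ> zpow f t"
proof (cases t)
  case (nonneg n)
  then have "t + 1 = int (Suc n)" by simp
  then show ?thesis using nonneg by (simp only: zpow_int) simp
next
  case (neg n)
  then have e: "t + 1 = - int n" by simp
  have fi: "f \<circ> inv f = id" using assms bij_is_surj surj_iff by blast
  have "zpow f (- int n) = inv f ^^ n" by (simp add: zpow_def)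
  then show ?thesis using neg e fi
    by (simp only: zpow_neg funpow.simps(2)) (simp flip: comp_assoc)
qed

lemma zpow_minus1: assumes "bij f" shows "zpow f (t-1) = inv f \<circ> zpow f t"
proof -
  have "zpow f t = f \<circ> zpow f (t-1)" using zpow_plus1[OF assms, of "t-1"] by simp
  moreover have "inv f \<circ> f = id" using assms bij_is_inj inj_iff by blast
  ultimately show ?thesis by (simp flip: comp_assoc)
qed

lemma zpow_S: assumes "f \<in> S_grp" "bij f" shows "zpow f t \<in> S_grp"
proof (induct t rule: zind)
  case 1 then show ?case by (simp add: S_id)
next
  case (2 t) show ?case unfolding zpow_plus1[OF assms(2)] by (rule S_mult[OF 2 assms(1)])
next
  case (3 t) show ?case unfolding zpow_minus1[OF assms(2)] by (rule S_mult[OF 3 S_inv[OF assms(1)]])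
qed

lemma zpow_add: assumes "bij f" shows "zpow f (a+b) = zpow f a \<circ> zpow f b"
proof (induct a rule: zind)
  case 1 then show ?case by simp
next
  case (2 t)
  have "zpow f (t+1+b) = zpow f ((t+b)+1)" by (simp add: algebra_simps)
  then show ?case using 2 zpow_plus1[OF assms] by (simp add: comp_assoc)
next
  case (3 t)
  have "zpow f (t-1+b) = zpow f ((t+b)-1)" by (simp add: algebra_simps)
  then show ?case using 3 zpow_minus1[OF assms] by (simp add: comp_assoc)
qed

lemma inv_commute: assumes "f \<circ> g = g \<circ> f" "bij g" shows "inv g \<circ> f = f \<circ> inv g"
proof -
  have gi: "g \<circ> inv g = id" using assms(2) bij_is_surj surj_iff by blast
  have ig: "inv g \<circ> g = id" using assms(2) bij_is_inj inj_iff by blast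
  have "inv g \<circ> f = inv g \<circ> f \<circ> (g \<circ> inv g)" by (simp add: gi)
  also have "\<dots> = inv g \<circ> (f \<circ> g) \<circ> inv g" by (simp add: comp_assoc)
  also have "\<dots> = (inv g \<circ> g) \<circ> f \<circ> inv g" by (simp add: assms(1) comp_assoc)
  also have "\<dots> = f \<circ> inv g" by (simp add: ig)
  finally show ?thesis .
qed

lemma zpow_commute: assumes "f \<circ> g = g \<circ> f" "bij g" shows "zpow g t \<circ> f = f \<circ> zpow g t"
proof (induct t rule: zind)
  case 1 then show ?case by simp
next
  case (2 t)
  have p1: "g (f x) = f (g x)" for x using assms(1) by (metis comp_apply)
  have p2: "zpow g t (f x) = f (zpow g t x)" for x using 2 by (metis comp_apply)
  show ?case by (rule ext) (simp add: zpow_plus1[OF assms(2)] p1 p2)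
next
  case (3 t)
  have c: "inv g \<circ> f = f \<circ> inv g" by (rule inv_commute[OF assms])
  have p1: "inv g (f x) = f (inv g x)" for x using c by (metis comp_apply)
  have p2: "zpow g t (f x) = f (zpow g t x)" for x using 3 by (metis comp_apply)
  show ?case by (rule ext) (simp add: zpow_minus1[OF assms(2)] p1 p2)
qed

lemma E_S:
  assumes bR: "bij R" and bX: "bij X" and c: "X \<circ> R = R \<circ> X" and E: "inv R \<circ> X \<in> S_grp"
  shows "zpow R (-t) \<circ> zpow X t \<in> S_grp"
proof (induct t rule: zind)
  case 1 then show ?case by (simp add: S_id)
next
  case (2 t)
  have cc: "zpow R (-t) \<circ> X = X \<circ> zpow R (-t)" by (rule zpow_commute[OF c bR])
  have "zpow R (-(t+1)) \<circ> zpow X (t+1) = inv R \<circ> (zpow R (-t) \<circ> X) \<circ> zpow X t"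
    using zpow_minus1[OF bR, of "-t"] zpow_plus1[OF bX, of t] by (simp add: comp_assoc)
  also have "\<dots> = (inv R \<circ> X) \<circ> (zpow R (-t) \<circ> zpow X t)" by (simp add: cc comp_assoc)
  finally have eq: "zpow R (-(t+1)) \<circ> zpow X (t+1) = (inv R \<circ> X) \<circ> (zpow R (-t) \<circ> zpow X t)" .
  show ?case unfolding eq by (rule S_mult[OF 2 E])
next
  case (3 t)
  have c2: "inv X \<circ> R = R \<circ> inv X" by (rule inv_commute[OF c[symmetric] bX])
  have cc: "zpow R (-t) \<circ> inv X = inv X \<circ> zpow R (-t)" by (rule zpow_commute[OF c2 bR])
  have iE: "inv (inv R \<circ> X) = inv X \<circ> R"
    using o_inv_distrib[OF bij_imp_bij_inv[OF bR] bX] inv_inv_eq[OF bR] by simp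
  have "zpow R (-(t-1)) \<circ> zpow X (t-1) = R \<circ> (zpow R (-t) \<circ> inv X) \<circ> zpow X t"
    using zpow_plus1[OF bR, of "-t"] zpow_minus1[OF bX, of t] by (simp add: comp_assoc)
  also have "\<dots> = (inv X \<circ> R) \<circ> (zpow R (-t) \<circ> zpow X t)" by (simp add: cc c2 comp_assoc)
  also have "\<dots> = inv (inv R \<circ> X) \<circ> (zpow R (-t) \<circ> zpow X t)" by (simp add: iE)
  finally have eq: "zpow R (-(t-1)) \<circ> zpow X (t-1) = inv (inv R \<circ> X) \<circ> (zpow R (-t) \<circ> zpow X t)" .
  show ?case unfolding eq by (rule S_mult[OF 3 S_inv[OF E]])
qed

lemma rprod_snoc: "rprod (gs @ [g]) = g \<circ> rprod gs"
  by (simp add: rprod_def)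

lemma prod_main:
  assumes "\<forall>(s,t)\<in>set ps. incomp s r \<and> Q s r"
  shows "\<exists>A\<in>S_grp. rprod (map (\<lambda>(s,t). zpow (ys s) t) ps) = zpow (ys r) (sum_list (map snd ps)) \<circ> A"
  using assms
proof (induct ps rule: rev_induct)
  case Nil then show ?case by (auto simp: rprod_def S_id)
next
  case (snoc p ps)
  obtain s t where p: "p = (s, t)" by (cases p)
  have pre: "\<forall>(s,t)\<in>set ps. incomp s r \<and> Q s r" using snoc.prems by auto
  obtain A where A: "A \<in> S_grp"
    and eq: "rprod (map (\<lambda>(s,t). zpow (ys s) t) ps) = zpow (ys r) (sum_list (map snd ps)) \<circ> A"
    using snoc.hyps[OF pre] by blast
  have ic: "incomp s r" and q: "Q s r" using snoc.prems p by auto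
  define R where "R = ys r"
  define X where "X = ys s"
  define \<Sigma> where "\<Sigma> = sum_list (map snd ps)"
  have bR: "bij R" and bX: "bij X" using bij_ys R_def X_def by auto
  have c: "X \<circ> R = R \<circ> X" unfolding R_def X_def ys_def by (rule at_word_commute[OF ic])
  have E: "inv R \<circ> X \<in> S_grp" using q by (simp add: Q_def R_def X_def)
  have ES: "zpow R (-t) \<circ> zpow X t \<in> S_grp" by (rule E_S[OF bR bX c E])
  have c2: "zpow X t \<circ> R = R \<circ> zpow X t" by (rule zpow_commute[OF c[symmetric] bX])
  have c3: "zpow R \<Sigma> \<circ> zpow X t = zpow X t \<circ> zpow R \<Sigma>" by (rule zpow_commute[OF c2 bR])
  have add: "zpow R (\<Sigma> + t) \<circ> zpow R (-t) = zpow R \<Sigma>"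
    using zpow_add[OF bR, of "\<Sigma> + t" "-t"] by simp
  have "rprod (map (\<lambda>(s,t). zpow (ys s) t) (ps @ [p])) = zpow X t \<circ> zpow R \<Sigma> \<circ> A"
    by (simp add: rprod_snoc p eq X_def R_def \<Sigma>_def comp_assoc)
  also have "\<dots> = zpow R (\<Sigma> + t) \<circ> ((zpow R (-t) \<circ> zpow X t) \<circ> A)"
    by (simp add: c3 add flip: comp_assoc)
  finally have calc: "rprod (map (\<lambda>(s,t). zpow (ys s) t) (ps @ [p])) = zpow R (\<Sigma> + t) \<circ> ((zpow R (-t) \<circ> zpow X t) \<circ> A)" .
  have sm: "sum_list (map snd (ps @ [p])) = \<Sigma> + t" by (simp add: p \<Sigma>_def)
  have fin: "rprod (map (\<lambda>(s,t). zpow (ys s) t) (ps @ [p])) = zpow (ys r) (sum_list (map snd (ps @ [p]))) \<circ> ((zpow R (-t) \<circ> zpow X t) \<circ> A)"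
    unfolding sm using calc by (simp only: R_def)
  show ?case using fin S_mult[OF A ES] by blast
qed

lemma nonall: "\<forall>m. s \<noteq> replicate m True \<Longrightarrow> False \<in> set s"
proof (rule ccontr)
  assume a: "\<forall>m. s \<noteq> replicate m True" "False \<notin> set s"
  have "\<forall>y\<in>set s. y" using a(2) by (metis (full_types))
  then have "s = replicate (length s) True" by (auto intro: replicate_eqI)
  then show False using a(1) by blast
qed

theorem lemma6p8:
  fixes ss :: "bool list list" and ts :: "int list"
  assumes "length ss = length ts"
    and "\<forall>s\<in>set ss. \<forall>m. s \<noteq> replicate m True"
    and "sum_list ts = 0"
  shows "rprod (map2 (\<lambda>s t. zpow (ys s) t) ss ts) \<in> S_grp"
proof -
  define N where "N = sum_list (map length ss)"
  define r where "r = replicate N True @ [False]"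
  have Kr: "K r" by (rule K_all) (simp add: r_def)
  have good: "incomp s r \<and> Q s r" if s: "s \<in> set ss" for s
  proof
    have "False \<in> set s" using assms(2) s nonall by blast
    then obtain i where i: "i < length s" "s ! i = False" by (metis in_set_conv_nth)
    have "length s \<le> N" unfolding N_def using s by (simp add: member_le_sum_list)
    then have "i < N" using i by simp
    then have "r ! i = True" "i < length r" by (simp_all add: r_def nth_append)
    then show "incomp s r" unfolding incomp_def using i by auto
    have "K s" by (rule K_all) fact
    then show "Q s r" using Kr unfolding K_def by (meson Q_sym Q_trans)
  qed
  have "\<forall>(s,t)\<in>set (zip ss ts). incomp s r \<and> Q s r"
    using good by (auto dest: set_zip_leftD)
  then obtain A where A: "A \<in> S_grp"
    and eq: "rprod (map (\<lambda>(s,t). zpow (ys s) t) (zip ss ts)) = zpow (ys r) (sum_list (map snd (zip ss ts))) \<circ> A"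
    using prod_main by blast
  have "sum_list (map snd (zip ss ts)) = 0" using assms(1,3) by simp
  then have "rprod (map (\<lambda>(s,t). zpow (ys s) t) (zip ss ts)) = A" using eq by simp
  then show ?thesis using A by simp
qed

end
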